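(* The quasi-Euclidean metric tensor is conformal to the Euclidean metric tensor. Precisely: on $V_N\setminus\{0\}$ let $n^{rs}(t)=h^2r^{rs}+\frac14g^2\,t^rt^s/S(t)^2$, let $\xi(t)=\big[\tfrac12S(t)^2\big]^{(h-1)/2}$, and consider the map $t\mapsto\tilde t$, $\tilde t^p=\xi(t)\,t^p/h$, with Jacobian $k^p_q=\partial\tilde t^p/\partial t^q$. Then $$k^p_r\,k^q_s\,n^{rs}(t)=\xi(t)^2\,r^{pq}\qquad\text{for all }t\neq0 .$$
   Context: Let $N\ge2$; points of $V_N=\mathbb{R}^N$ are $t=(t^1,\dots,t^N)$; indices $p,q,r,s$ run over $1,\dots,N$, repeated indices summed. $(r_{pq})$ is a symmetric positive-definite matrix of the form $r_{NN}=1$, $r_{Na}=0$ ($a<N$), with inverse $(r^{pq})$, and $S(t)=\sqrt{r_{pq}t^pt^q}$. Fix $g\in(-2,2)$, $h=\sqrt{1-g^2/4}$. The quasi-Euclidean metric tensor is $n_{pq}(g;t)=\frac1{h^2}r_{pq}-\frac14\frac{g^2}{h^2}L_pL_q$ with $L_p=r_{pq}t^q/S(t)$; its inverse is $n^{rs}$ as given. *)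

theory Defs
  imports "HOL-Analysis.Analysis"
begin

text \<open>Vectors of V_N are real^'n (N = CARD('n)); the matrix (r_pq) is r, its inverse
  (r^pq) is matrix_inv r.\<close>

definition hval :: "real \<Rightarrow> real" where
  "hval g = sqrt (1 - g^2 / 4)"

definition Sfun :: "real^'n^'n \<Rightarrow> real^'n \<Rightarrow> real" where
  "Sfun r t = sqrt (t \<bullet> (r *v t))"

definition xi :: "real^'n^'n \<Rightarrow> real \<Rightarrow> real^'n \<Rightarrow> real" where
  "xi r g t = ((Sfun r t)^2 / 2) powr ((hval g - 1) / 2)"

definition nup :: "real^'n^'n \<Rightarrow> real \<Rightarrow> real^'n \<Rightarrow> real^'n^'n" where
  "nup r g t = (\<chi> p q. (hval g)^2 * (matrix_inv r $ p $ q)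
                       + g^2 / 4 * (t $ p * t $ q) / (Sfun r t)^2)"

definition qe_map :: "real^'n^'n \<Rightarrow> real \<Rightarrow> real^'n \<Rightarrow> real^'n" where
  "qe_map r g t = (xi r g t / hval g) *\<^sub>R t"

end

theory Submission
  imports Defs
begin

definition outer :: "real^'n \<Rightarrow> real^'m \<Rightarrow> real^'m^'n" where
  "outer x y = (\<chi> i j. x$i * y$j)"

lemma outer_mult_left: "outer x y ** M = outer x (y v* M)"
  by (simp add: outer_def matrix_matrix_mult_def vector_matrix_mult_def vec_eq_iff sum_distrib_left mult_ac)

lemma outer_mult_right: "M ** outer x y = outer (M *v x) y"
  by (simp add: outer_def matrix_matrix_mult_def matrix_vector_mult_def vec_eq_iff sum_distrib_left mult_ac)

lemma transpose_outer: "transpose (outer x y) = outer y x"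
  by (simp add: outer_def transpose_def vec_eq_iff mult_ac)

lemma outer_vmult: "(w::real^'n) v* outer x y = (w \<bullet> x) *\<^sub>R y"
  by (simp add: outer_def vector_matrix_mult_def vec_eq_iff inner_vec_def sum_distrib_left mult_ac)

lemma outer_mvmult: "outer x y *v (w::real^'n) = (y \<bullet> w) *\<^sub>R x"
  by (simp add: outer_def matrix_vector_mult_def vec_eq_iff inner_vec_def sum_distrib_left mult_ac)

lemma outer_scale: "outer (a *\<^sub>R x) y = a *\<^sub>R outer x y" "outer x (a *\<^sub>R y) = a *\<^sub>R outer x y"
  by (simp_all add: outer_def vec_eq_iff mult_ac)

lemma vmult_add: "(x::real^'n) v* (A + B) = x v* A + x v* B"
  by (simp add: vector_matrix_mult_def vec_eq_iff sum.distrib algebra_simps)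
lemma vmult_scale: "(x::real^'n) v* (a *\<^sub>R B) = a *\<^sub>R (x v* B)" "(a *\<^sub>R x) v* B = a *\<^sub>R (x v* B)"
  by (simp_all add: vector_matrix_mult_def vec_eq_iff sum_distrib_left algebra_simps)
lemma mvmult_add: "(A + B) *v (x::real^'n) = A *v x + B *v x"
  by (simp add: matrix_vector_mult_def vec_eq_iff sum.distrib algebra_simps)
lemma mvmult_scale: "(a *\<^sub>R B) *v (x::real^'n) = a *\<^sub>R (B *v x)" "B *v (a *\<^sub>R x) = a *\<^sub>R (B *v x)"
  by (simp_all add: matrix_vector_mult_def vec_eq_iff sum_distrib_left algebra_simps)
lemma mat1_vmult: "(x::real^'n) v* mat 1 = x"
  by (simp add: vector_matrix_mult_def vec_eq_iff mat_def if_distrib cong: if_cong)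

lemma madd_r: "((A::real^'m^'n) + B) ** C = A ** C + B ** C"
  by (simp add: matrix_matrix_mult_def vec_eq_iff sum.distrib algebra_simps)
lemma madd_l: "(C::real^'m^'n) ** (A + B) = C ** A + C ** B"
  by (simp add: matrix_matrix_mult_def vec_eq_iff sum.distrib algebra_simps)
lemma transp_add: "transpose ((A::real^'m^'n) + B) = transpose A + transpose B"
  by (simp add: transpose_def vec_eq_iff)
lemma transp_scale: "transpose (a *\<^sub>R (A::real^'m^'n)) = a *\<^sub>R transpose A"
  by (simp add: transpose_def vec_eq_iff)

lemma deriv_qe:
  fixes r :: "real^'n^'n" and t :: "real^'n"
  assumes sym: "transpose r = r" and pd: "\<forall>x. x \<noteq> 0 \<longrightarrow> x \<bullet> (r *v x) > 0"
    and h: "hval g > 0" and t: "t \<noteq> 0"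
  defines "q \<equiv> t \<bullet> (r *v t)"
  defines "c \<equiv> xi r g t / hval g"
  defines "\<beta> \<equiv> (hval g - 1) / q"
  shows "(qe_map r g has_derivative (\<lambda>v. c *\<^sub>R v + (c * \<beta> * ((r *v t) \<bullet> v)) *\<^sub>R t)) (at t)"
proof -
  let ?\<alpha> = "(hval g - 1) / 2"
  have q0: "\<And>x. x \<bullet> (r *v x) \<ge> 0"
    using pd by (metis inner_zero_left less_eq_real_def matrix_vector_mult_0_right)
  have qpos: "q > 0" using pd t q_def by auto
  have xieq: "xi r g = (\<lambda>x. ((x \<bullet> (r *v x)) / 2) powr ?\<alpha>)"
    using q0 by (simp add: xi_def Sfun_def fun_eq_iff)
  have sy: "\<And>v. t \<bullet> (r *v v) = (r *v t) \<bullet> v"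
    by (metis dot_lmul_matrix transpose_matrix_vector sym)
  have "((\<lambda>x. x \<bullet> (r *v x)) has_derivative (\<lambda>v. 2 * ((r *v t) \<bullet> v))) (at t)"
  proof -
    have "((\<lambda>x. x \<bullet> (r *v x)) has_derivative (\<lambda>v. v \<bullet> (r *v t) + t \<bullet> (r *v v))) (at t)"
      by (auto intro!: derivative_eq_intros bounded_linear.has_derivative[OF matrix_vector_mul_bounded_linear])
    then show ?thesis
      by (rule has_derivative_eq_rhs) (auto simp: fun_eq_iff sy inner_commute)
  qed
  from has_derivative_mult_left[OF this, of "1/2"]
  have dq: "((\<lambda>x. x \<bullet> (r *v x) / 2) has_derivative (\<lambda>v. (r *v t) \<bullet> v)) (at t)"
    by simp
  define X where "X = (\<lambda>x. ((x \<bullet> (r *v x)) / 2) powr ?\<alpha>)"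
  have dX: "(X has_derivative (\<lambda>v. (((t \<bullet> (r *v t)) / 2) powr ?\<alpha>) * (0 * ln (q/2) + ((r *v t) \<bullet> v) * ?\<alpha> / (q/2)))) (at t)"
    unfolding X_def q_def
    by (rule has_derivative_powr[OF dq has_derivative_const]) (use qpos q_def in auto)
  have qm: "qe_map r g = (\<lambda>x. (X x / hval g) *\<^sub>R x)"
    by (simp add: qe_map_def xieq X_def fun_eq_iff)
  have xt: "xi r g t = X t" by (simp add: xieq X_def)
  have "((\<lambda>x. (X x / hval g) *\<^sub>R x) has_derivative
     (\<lambda>v. ((((t \<bullet> (r *v t)) / 2) powr ?\<alpha>) * (0 * ln (q/2) + ((r *v t) \<bullet> v) * ?\<alpha> / (q/2)) / hval g) *\<^sub>R t
         + (X t / hval g) *\<^sub>R v)) (at t)"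
    by (rule has_derivative_eq_rhs, rule has_derivative_scaleR[OF has_derivative_divide[OF dX has_derivative_const] has_derivative_ident])
      (use h in \<open>auto simp: fun_eq_iff\<close>)
  then show ?thesis
    unfolding qm
    by (rule has_derivative_eq_rhs) (use qpos h in \<open>auto simp: fun_eq_iff c_def \<beta>_def xt X_def q_def[symmetric] field_simps\<close>)
qed

theorem theorem2p16:
  fixes r :: "real^'n^'n" and Nidx :: 'n and g :: real and t :: "real^'n"
  assumes "CARD('n) \<ge> 2"
    and sym: "transpose r = r"
    and pd: "\<forall>x. x \<noteq> 0 \<longrightarrow> x \<bullet> (r *v x) > 0"
    and "r $ Nidx $ Nidx = 1"
    and "\<forall>a. a \<noteq> Nidx \<longrightarrow> r $ Nidx $ a = 0"
    and g1: "-2 < g" and g2: "g < 2"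
    and t: "t \<noteq> 0"
  shows "jacobian (qe_map r g) (at t) ** nup r g t ** transpose (jacobian (qe_map r g) (at t))
         = (xi r g t)^2 *\<^sub>R matrix_inv r"
proof -
  define q where "q = t \<bullet> (r *v t)"
  define h where "h = hval g"
  define c where "c = xi r g t / h"
  define \<beta> where "\<beta> = (h - 1) / q"
  define \<gamma> where "\<gamma> = g^2 / 4 / q"
  define u where "u = r *v t"
  define A where "A = matrix_inv r"
  have qpos: "q > 0" using pd t q_def by auto
  have g4: "g^2 < 4" 
  proof -
    have "(2-g)*(2+g) > 0" using g1 g2 by simp
    then show ?thesis by (simp add: power2_eq_square algebra_simps)
  qed
  have hpos: "h > 0" unfolding h_def hval_def using g4 by simp
  have hsq: "h^2 = 1 - g^2/4" unfolding h_def hval_def using g4 by simp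
  have inv: "invertible r"
    unfolding invertible_left_inverse matrix_left_invertible_ker
    using pd by (metis inner_zero_right less_irrefl)
  have rA: "r ** A = mat 1" and Ar: "A ** r = mat 1"
    using someI_ex[OF inv[unfolded invertible_def]] by (simp_all add: A_def matrix_inv_def)
  have Au: "A *v u = t" by (simp add: u_def matrix_vector_mul_assoc Ar)
  have tAr: "transpose A ** r = mat 1"
    by (metis sym matrix_transpose_mul rA transpose_mat)
  have uA: "u v* A = t"
    by (metis u_def transpose_matrix_vector matrix_vector_mul_assoc tAr matrix_vector_mul_lid)
  have ut: "u \<bullet> t = q" by (simp add: u_def q_def inner_commute)
  have tu: "t \<bullet> u = q" by (simp add: u_def q_def)
  have D: "(qe_map r g has_derivative (\<lambda>v. c *\<^sub>R v + (c * \<beta> * (u \<bullet> v)) *\<^sub>R t)) (at t)"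
    using deriv_qe[OF sym pd _ t, of g] hpos unfolding c_def \<beta>_def q_def u_def h_def by simp
  have K: "jacobian (qe_map r g) (at t) = c *\<^sub>R mat 1 + outer t ((c * \<beta>) *\<^sub>R u)"
    unfolding jacobian_def frechet_derivative_at[OF D, symmetric]
    by (simp add: matrix_def outer_def vec_eq_iff mat_def inner_axis mult_ac) (simp add: axis_def)
  have N: "nup r g t = h^2 *\<^sub>R A + \<gamma> *\<^sub>R outer t t"
    using qpos unfolding nup_def outer_def
    by (simp add: vec_eq_iff A_def h_def \<gamma>_def Sfun_def q_def[symmetric] less_imp_le)
  define w where "w = (c * \<beta>) *\<^sub>R u"
  define \<mu> where "\<mu> = c*\<gamma> + c*\<beta>*h^2 + \<gamma>*c*\<beta>*q"
  have wN: "w v* (h^2 *\<^sub>R A + \<gamma> *\<^sub>R outer t t) = (c*\<beta>*h^2 + \<gamma>*c*\<beta>*q) *\<^sub>R t"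
    by (simp add: vmult_add vmult_scale outer_vmult w_def uA ut algebra_simps)
  have KN: "(c *\<^sub>R mat 1 + outer t w) ** (h^2 *\<^sub>R A + \<gamma> *\<^sub>R outer t t) = (c*h^2) *\<^sub>R A + \<mu> *\<^sub>R outer t t"
    unfolding madd_r outer_mult_left wN
    by (simp add: scalar_matrix_assoc[symmetric] outer_def \<mu>_def vec_eq_iff algebra_simps)
  have KNw: "((c*h^2) *\<^sub>R A + \<mu> *\<^sub>R outer t t) *v w = (c*\<beta>*c*h^2 + \<mu>*c*\<beta>*q) *\<^sub>R t"
    by (simp add: mvmult_add mvmult_scale outer_mvmult w_def Au ut tu algebra_simps)
  have KNK: "((c*h^2) *\<^sub>R A + \<mu> *\<^sub>R outer t t) ** transpose (c *\<^sub>R mat 1 + outer t w)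
     = (c*c*h^2) *\<^sub>R A + (c*\<mu> + c*\<beta>*c*h^2 + \<mu>*c*\<beta>*q) *\<^sub>R outer t t"
    unfolding transp_add transp_scale transpose_outer transpose_mat madd_l outer_mult_right KNw
    by (simp add: matrix_scalar_ac outer_def vec_eq_iff algebra_simps)
  have coef: "c*\<mu> + c*\<beta>*c*h^2 + \<mu>*c*\<beta>*q = 0"
  proof -
    have g': "\<gamma> = (1 - h^2) / q" using hsq by (simp add: \<gamma>_def)
    show ?thesis unfolding \<mu>_def \<beta>_def g' using qpos
      by (simp add: field_simps power2_eq_square)
  qed
  have cc: "c*c*h^2 = (xi r g t)^2" using hpos by (simp add: c_def power2_eq_square)
  show ?thesis
    unfolding A_def[symmetric] K N w_def[symmetric] KN KNK coef cc by simp
qed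
end
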